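(* Let $n\geq m\geq 1$ and let $\mathcal{C},\mathcal{D}\subseteq\binom{[n]}{m}$ be collections of $m$-subsets of $[n]=\{1,\dots,n\}$ such that the strata $\mathcal{S}^{tnz}_{\mathcal{C}}(\mathbb{R})$ and $\mathcal{S}^{tnz}_{\mathcal{D}}(\mathbb{R})$ are non-empty. Then $\mathcal{S}^{tnz}_{\mathcal{C}}(\mathbb{R})$ and $\mathcal{S}^{tnz}_{\mathcal{D}}(\mathbb{R})$ lie in the same orbit of the action of $S_n$ on $\mathcal{S}^{tnz}_{mn}(\mathbb{R})$ if and only if for any two matrices $M=(v_1,\dots,v_n),N=(w_1,\dots,w_n)\in Mat^{tnz}_{mn}(\mathbb{R})$ with $GL_m(\mathbb{R})M\in\mathcal{S}^{tnz}_{\mathcal{C}}(\mathbb{R})$ and $GL_m(\mathbb{R})N\in\mathcal{S}^{tnz}_{\mathcal{D}}(\mathbb{R})$, the sets $S=\{v_1,\dots,v_n\}$ and $T=\{w_1,\dots,w_n\}$ are isomorphic generic point arrangements.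
   Context: A point arrangement $S=\{v_1,\dots,v_n\}\subset\mathbb{R}^m$ is generic if every subset of $S$ of cardinality at most $m$ is linearly independent. Two generic point arrangements $S_1,S_2\subset\mathbb{R}^m$ are isomorphic if there is a bijection $\sigma:S_1\to S_2$ such that for every $(m+1)$-subset $\{v_{i_1},\dots,v_{i_{m+1}}\}\subseteq S_1$, writing $v_{i_{m+1}}=\sum_{j=1}^m a_jv_{i_j}$ and $\sigma(v_{i_{m+1}})=\sum_{j=1}^m b_j\sigma(v_{i_j})$, one has $a_jb_j>0$ for all $1\le j\le m$. $Mat^{tnz}_{mn}(\mathbb{R})$ is the set of real $m\times n$ matrices all of whose maximal ($m\times m$) minors $\Delta_I(M)=\det(M_I)$, $I\in\binom{[n]}{m}$ ($M_I$ the submatrix on columns $I$), are nonzero; $Gr^{tnz}_{mn}(\mathbb{R})=GL_m(\mathbb{R})\backslash Mat^{tnz}_{mn}(\mathbb{R})$ (left multiplication). For $\mathcal{C}\subseteq\binom{[n]}{m}$ the stratum $\mathcal{S}^{tnz}_{\mathcal{C}}(\mathbb{R})$ is the set of $GL_m(\mathbb{R})M\in Gr^{tnz}_{mn}(\mathbb{R})$ such that either $\Delta_I(M)>0$ for all $I\in\mathcal{C}$ and $\Delta_I(M)<0$ for all $I\notin\mathcal{C}$, or $\Delta_I(M)<0$ for all $I\in\mathcal{C}$ and $\Delta_I(M)>0$ for all $I\notin\mathcal{C}$ (so $\mathcal{S}^{tnz}_{\mathcal{C}}=\mathcal{S}^{tnz}_{\binom{[n]}{m}\setminus\mathcal{C}}$).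 $\mathcal{S}^{tnz}_{mn}(\mathbb{R})$ denotes the set of non-empty strata. The symmetric group $S_n$ acts on $Gr^{tnz}_{mn}(\mathbb{R})$ by $\sigma\bullet GL_m(\mathbb{R})(v_1,\dots,v_n)=GL_m(\mathbb{R})(v_{\sigma^{-1}(1)},\dots,v_{\sigma^{-1}(n)})$, which induces an action on $\mathcal{S}^{tnz}_{mn}(\mathbb{R})$: $\sigma\bullet\mathcal{S}^{tnz}_{\mathcal{C}}(\mathbb{R})$ is the stratum containing $\sigma\bullet GL_m(\mathbb{R})M$ for any $GL_m(\mathbb{R})M\in\mathcal{S}^{tnz}_{\mathcal{C}}(\mathbb{R})$. *)

theory Defs
  imports "Jordan_Normal_Form.DL_Submatrix" "Jordan_Normal_Form.Determinant"
          "HOL-Combinatorics.Permutations"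
begin

text \<open>Conventions: [n] is rendered as the index set {0..<n} (0-based); an m x n real
 matrix is a JNF matrix in carrier_mat m n; its j-th column is col A j.\<close>

definition msubsets :: "nat \<Rightarrow> nat \<Rightarrow> nat set set" where
  "msubsets n m = {I. I \<subseteq> {0..<n} \<and> card I = m}"

definition maxminor :: "real mat \<Rightarrow> nat set \<Rightarrow> real" where
  "maxminor A I = det (submatrix A UNIV I)"

definition tnz :: "nat \<Rightarrow> nat \<Rightarrow> real mat \<Rightarrow> bool" where
  "tnz m n A \<longleftrightarrow> A \<in> carrier_mat m n \<and> (\<forall>I\<in>msubsets n m. maxminor A I \<noteq> 0)"

text \<open>The stratum S_C, viewed as the (GL_m-invariant) set of matrices whose row space lies in it.\<close>
definition stratum :: "nat \<Rightarrow> nat \<Rightarrow> nat set set \<Rightarrow> real mat set" where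
  "stratum m n C = {A. tnz m n A \<and>
     ((\<forall>I\<in>msubsets n m. (I \<in> C \<longrightarrow> maxminor A I > 0) \<and> (I \<notin> C \<longrightarrow> maxminor A I < 0)) \<or>
      (\<forall>I\<in>msubsets n m. (I \<in> C \<longrightarrow> maxminor A I < 0) \<and> (I \<notin> C \<longrightarrow> maxminor A I > 0)))}"

definition perm_act :: "(nat \<Rightarrow> nat) \<Rightarrow> real mat \<Rightarrow> real mat" where
  "perm_act \<sigma> A = mat (dim_row A) (dim_col A) (\<lambda>(i,j). A $$ (i, inv_into UNIV \<sigma> j))"

definition same_orbit :: "nat \<Rightarrow> nat \<Rightarrow> nat set set \<Rightarrow> nat set set \<Rightarrow> bool" where
  "same_orbit m n C D \<longleftrightarrow>
     (\<exists>\<sigma>. \<sigma> permutes {0..<n} \<and> (\<forall>A\<in>stratum m n C. perm_act \<sigma> A \<in> stratum m n D))"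

text \<open>Point arrangements as families v_0,...,v_{n-1} of vectors in R^m.\<close>
definition lin_indep_fam :: "nat \<Rightarrow> (nat \<Rightarrow> real vec) \<Rightarrow> nat set \<Rightarrow> bool" where
  "lin_indep_fam m v J \<longleftrightarrow>
     (\<forall>c. (\<forall>k<m. (\<Sum>j\<in>J. c j * v j $ k) = 0) \<longrightarrow> (\<forall>j\<in>J. c j = 0))"

definition generic_arr :: "nat \<Rightarrow> nat \<Rightarrow> (nat \<Rightarrow> real vec) \<Rightarrow> bool" where
  "generic_arr m n v \<longleftrightarrow> (\<forall>j<n. dim_vec (v j) = m) \<and>
     (\<forall>J. J \<subseteq> {0..<n} \<and> card J \<le> m \<longrightarrow> lin_indep_fam m v J)"

definition iso_arr :: "nat \<Rightarrow> nat \<Rightarrow> (nat \<Rightarrow> real vec) \<Rightarrow> (nat \<Rightarrow> real vec) \<Rightarrow> bool" where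
  "iso_arr m n v w \<longleftrightarrow> (\<exists>\<sigma>. bij_betw \<sigma> {0..<n} {0..<n} \<and>
     (\<forall>f. inj_on f {..m} \<and> f ` {..m} \<subseteq> {0..<n} \<longrightarrow>
       (\<forall>a b. (\<forall>k<m. v (f m) $ k = (\<Sum>j<m. a j * v (f j) $ k)) \<and>
              (\<forall>k<m. w (\<sigma> (f m)) $ k = (\<Sum>j<m. b j * w (\<sigma> (f j)) $ k))
              \<longrightarrow> (\<forall>j<m. a j * b j > 0))))"

definition iso_generic_arr :: "nat \<Rightarrow> nat \<Rightarrow> (nat \<Rightarrow> real vec) \<Rightarrow> (nat \<Rightarrow> real vec) \<Rightarrow> bool" where
  "iso_generic_arr m n v w \<longleftrightarrow> generic_arr m n v \<and> generic_arr m n w \<and> iso_arr m n v w"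

end

theory Submission imports Defs begin

definition cm :: "nat \<Rightarrow> real mat \<Rightarrow> (nat \<Rightarrow> nat) \<Rightarrow> real mat" where
  "cm m A g = mat m m (\<lambda>(i,j). A $$ (i, g j))"

lemma cm_carrier[simp]: "cm m A g \<in> carrier_mat m m" by (simp add: cm_def)

lemma cm_cong: "(\<And>j. j < m \<Longrightarrow> g j = h j) \<Longrightarrow> cm m A g = cm m A h"
  unfolding cm_def by (intro eq_matI) auto

lemma cm_pick:
  assumes A: "A \<in> carrier_mat m n" and I: "I \<subseteq> {0..<n}" "card I = m"
  shows "submatrix A UNIV I = cm m A (pick I)"
proof -
  have dA: "dim_row A = m" "dim_col A = n" using A by auto
  have r: "card {i. i < dim_row A \<and> i \<in> UNIV} = m" using A by simp
  have "{j. j < dim_col A \<and> j \<in> I} = I" using A I by auto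
  hence c: "card {j. j < dim_col A \<and> j \<in> I} = m" using I by simp
  show ?thesis
  proof (rule eq_matI)
    fix i j assume "i < dim_row (cm m A (pick I))" "j < dim_col (cm m A (pick I))"
    hence ij: "i < card {i. i < dim_row A \<and> i \<in> UNIV}" "j < card {j. j < dim_col A \<and> j \<in> I}"
      using r c by (auto simp: cm_def)
    show "submatrix A UNIV I $$ (i, j) = cm m A (pick I) $$ (i, j)"
      unfolding submatrix_index[OF ij] using ij r c by (simp add: cm_def pick_UNIV)
  qed (use c r dA in \<open>auto simp: dim_submatrix cm_def\<close>)
qed

lemma cm_perm:
  assumes p: "p permutes {0..<m}"
  shows "det (cm m A (g \<circ> p)) = signof p * det (cm m A g)"
proof -
  have pl: "\<And>j. j < m \<Longrightarrow> p j < m" using permutes_in_image[OF p] by auto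
  have eq: "cm m A (g \<circ> p) = transpose_mat (mat m m (\<lambda>(i,j). transpose_mat (cm m A g) $$ (p i, j)))"
    by (rule eq_matI) (auto simp: cm_def pl)
  have "det (cm m A (g \<circ> p)) = det (mat m m (\<lambda>(i,j). transpose_mat (cm m A g) $$ (p i, j)))"
    unfolding eq by (rule det_transpose) auto
  also have "\<dots> = signof p * det (transpose_mat (cm m A g))"
    by (rule det_permute_rows[OF _ p]) auto
  also have "det (transpose_mat (cm m A g)) = det (cm m A g)"
    by (rule det_transpose[of _ m]) simp
  finally show ?thesis .
qed

lemma sort_perm:
  assumes inj: "inj_on g {..<m}"
  shows "\<exists>p. p permutes {0..<m} \<and> (\<forall>j<m. g j = pick (g ` {..<m}) (p j))"
proof -
  let ?I = "g ` {..<m}"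
  define p where "p j = (if j < m then card {a\<in>?I. a < g j} else j)" for j
  have cI: "card ?I = m" using card_image[OF inj] by simp
  have pk: "pick ?I (p j) = g j" if "j < m" for j
    using pick_card_in_set[of "g j" ?I] that by (simp add: p_def)
  have pl: "p j < m" if "j < m" for j
  proof -
    have "{a\<in>?I. a < g j} \<subset> ?I" using that by auto
    hence "card {a\<in>?I. a < g j} < card ?I" by (intro psubset_card_mono) auto
    thus ?thesis using cI that by (simp add: p_def)
  qed
  have ip: "inj_on p {0..<m}"
  proof (rule inj_onI)
    fix x y assume "x \<in> {0..<m}" "y \<in> {0..<m}" "p x = p y"
    hence "g x = g y" using pk by (metis atLeastLessThan_iff)
    thus "x = y" using inj \<open>x \<in> _\<close> \<open>y \<in> _\<close> by (auto dest: inj_onD)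
  qed
  have "p ` {0..<m} = {0..<m}"
    by (rule endo_inj_surj) (use ip pl in auto)
  hence "bij_betw p {0..<m} {0..<m}" using ip by (simp add: bij_betw_def)
  hence "p permutes {0..<m}" by (rule bij_imp_permutes) (simp add: p_def)
  thus ?thesis using pk by auto
qed

lemma DD_sorted:
  assumes inj: "inj_on g {..<m}" and rng: "g ` {..<m} \<subseteq> {0..<n}"
  shows "\<exists>s::real. s * s = 1 \<and> (\<forall>A\<in>carrier_mat m n. det (cm m A g) = s * maxminor A (g ` {..<m}))"
proof -
  obtain p where p: "p permutes {0..<m}" and pk: "\<forall>j<m. g j = pick (g ` {..<m}) (p j)"
    using sort_perm[OF inj] by blast
  have cI: "card (g ` {..<m}) = m" using card_image[OF inj] by simp
  show ?thesis
  proof (intro exI[of _ "signof p"] conjI ballI)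
    show "signof p * signof p = (1::real)" by (cases p rule: sign_cases) auto
    fix A :: "real mat" assume A: "A \<in> carrier_mat m n"
    have "cm m A g = cm m A (pick (g ` {..<m}) \<circ> p)" by (rule cm_cong) (use pk in auto)
    hence "det (cm m A g) = signof p * det (cm m A (pick (g ` {..<m})))" using cm_perm[OF p] by simp
    also have "cm m A (pick (g ` {..<m})) = submatrix A UNIV (g ` {..<m})"
      using cm_pick[OF A rng cI] by simp
    finally show "det (cm m A g) = signof p * maxminor A (g ` {..<m})" by (simp add: maxminor_def)
  qed
qed

lemma perm_act_carrier: "A \<in> carrier_mat m n \<Longrightarrow> perm_act \<tau> A \<in> carrier_mat m n"
  by (simp add: perm_act_def)

lemma perm_act_index: "A \<in> carrier_mat m n \<Longrightarrow> i < m \<Longrightarrow> j < n \<Longrightarrow>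
   perm_act \<tau> A $$ (i,j) = A $$ (i, Hilbert_Choice.inv \<tau> j)"
  by (simp add: perm_act_def)

lemma cm_perm_act:
  assumes A: "A \<in> carrier_mat m n" and g: "\<And>j. j < m \<Longrightarrow> g j < n"
  shows "cm m (perm_act \<tau> A) g = cm m A (Hilbert_Choice.inv \<tau> \<circ> g)"
  by (rule eq_matI) (auto simp: cm_def perm_act_index[OF A] g)

lemma t1: fixes x :: "real vec" assumes "k < m" "x \<in> carrier_vec m" shows "(cm m A g *\<^sub>v x) $ k = (\<Sum>i<m. x $ i * A $$ (k, g i))"
proof -
  have "(cm m A g *\<^sub>v x) $ k = row (cm m A g) k \<bullet> x" using assms by (simp add: cm_def)
  also have "\<dots> = (\<Sum>i\<in>{0..<m}. row (cm m A g) k $ i * x $ i)" using assms by (simp add: scalar_prod_def)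
  also have "\<dots> = (\<Sum>i<m. x $ i * A $$ (k, g i))" using assms
    by (simp add: lessThan_atLeast0 cm_def mult.commute)
  finally show ?thesis .
qed

lemma cramer_step:
  assumes j: "j < m"
    and a: "\<forall>k<m. A $$ (k, g m) = (\<Sum>i<m. a i * A $$ (k, g i))"
  shows "det (cm m A (g(j := g m))) = a j * det (cm m A g)"
proof -
  let ?x = "vec m a"
  have x: "?x \<in> carrier_vec m" by simp
  have eq: "replace_col (cm m A g) (cm m A g *\<^sub>v ?x) j = cm m A (g(j := g m))"
  proof (rule eq_matI)
    fix k i assume "k < dim_row (cm m A (g(j := g m)))" "i < dim_col (cm m A (g(j := g m)))"
    hence ki: "k < m" "i < m" by (auto simp: cm_def)
    have "(cm m A g *\<^sub>v ?x) $ k = (\<Sum>i<m. ?x $ i * A $$ (k, g i))" by (rule t1[OF ki(1) x])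
    also have "\<dots> = (\<Sum>i<m. a i * A $$ (k, g i))" by (rule sum.cong) auto
    also have "\<dots> = A $$ (k, g m)" using a ki by simp
    finally have e: "(cm m A g *\<^sub>v ?x) $ k = A $$ (k, g m)" .
    show "replace_col (cm m A g) (cm m A g *\<^sub>v ?x) j $$ (k, i) = cm m A (g(j := g m)) $$ (k, i)"
      using ki e by (simp add: replace_col_def cm_def)
  qed (simp_all add: replace_col_def cm_def)
  have "det (replace_col (cm m A g) (cm m A g *\<^sub>v ?x) j) = ?x $ j * det (cm m A g)"
    by (rule cramer_lemma_mat[OF cm_carrier x j])
  thus ?thesis using eq j by simp
qed

lemma solve_exists:
  assumes d: "det (cm m A g) \<noteq> 0"
  shows "\<exists>a. \<forall>k<m. A $$ (k, g m) = (\<Sum>i<m. a i * A $$ (k, g i))"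
proof -
  let ?M = "cm m A g"
  have "?M \<in> Units (ring_mat TYPE(real) m undefined)"
    by (rule det_non_zero_imp_unit[OF cm_carrier d])
  then obtain N where N: "N \<in> carrier_mat m m" "?M * N = 1\<^sub>m m"
    unfolding Units_def ring_mat_def by auto
  define b where "b = vec m (\<lambda>k. A $$ (k, g m))"
  have b: "b \<in> carrier_vec m" by (simp add: b_def)
  define x where "x = N *\<^sub>v b"
  have x: "x \<in> carrier_vec m" using N by (simp add: x_def b_def)
  have "?M *\<^sub>v x = (?M * N) *\<^sub>v b"
    unfolding x_def by (rule assoc_mult_mat_vec[symmetric, OF cm_carrier N(1) b])
  also have "\<dots> = b" using N(2) b by simp
  finally have Mx: "?M *\<^sub>v x = b" .
  show ?thesis
  proof (intro exI[of _ "\<lambda>i. x $ i"] allI impI)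
    fix k assume k: "k < m"
    have "A $$ (k, g m) = (?M *\<^sub>v x) $ k" using Mx k by (simp add: b_def)
    also have "\<dots> = (\<Sum>i<m. x $ i * A $$ (k, g i))" by (rule t1[OF k x])
    finally show "A $$ (k, g m) = (\<Sum>i<m. x $ i * A $$ (k, g i))" .
  qed
qed


lemma pick_bij: "finite I \<Longrightarrow> bij_betw (pick I) {..<card I} I"
proof -
  assume f: "finite I"
  have "inj_on (pick I) {..<card I}"
  proof (rule inj_onI)
    fix x y assume "x \<in> {..<card I}" "y \<in> {..<card I}" "pick I x = pick I y"
    thus "x = y" using pick_mono[of y I x] pick_mono[of x I y] by (cases x y rule: linorder_cases) auto
  qed
  moreover have "pick I ` {..<card I} = I"
  proof
    show "pick I ` {..<card I} \<subseteq> I" using pick_in_set by auto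
    show "I \<subseteq> pick I ` {..<card I}"
    proof
      fix i assume i: "i \<in> I"
      have "{a\<in>I. a < i} \<subset> I" using i by auto
      hence "card {a\<in>I. a < i} < card I" using f by (intro psubset_card_mono) auto
      thus "i \<in> pick I ` {..<card I}" using pick_card_in_set[OF i, symmetric] by blast
    qed
  qed
  ultimately show ?thesis by (simp add: bij_betw_def)
qed

lemma extend_subset:
  assumes J: "J \<subseteq> {0..<n}" "card J \<le> m" and mn: "m \<le> n"
  shows "\<exists>T. T \<subseteq> {0..<n} - J \<and> card T = m - card J \<and> finite T"
proof -
  have fJ: "finite J" using J finite_subset by blast
  have "card ({0..<n} - J) = n - card J" using J fJ by (simp add: card_Diff_subset)
  hence "m - card J \<le> card ({0..<n} - J)" using J mn by simp
  then obtain T where "T \<subseteq> {0..<n} - J" "card T = m - card J" "finite T"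
    by (rule obtain_subset_with_card_n)
  thus ?thesis by blast
qed

lemma tnz_generic:
  assumes t: "tnz m n A" and mn: "m \<le> n"
  shows "generic_arr m n (col A)"
proof -
  have A: "A \<in> carrier_mat m n" using t by (simp add: tnz_def)
  show ?thesis unfolding generic_arr_def
  proof (intro conjI allI impI)
    fix j show "dim_vec (col A j) = m" using A by (simp add: col_def)
  next
    fix J assume JJ: "J \<subseteq> {0..<n} \<and> card J \<le> m"
    hence J: "J \<subseteq> {0..<n}" "card J \<le> m" by auto
    have fJ: "finite J" using J finite_subset by blast
    obtain T where T: "T \<subseteq> {0..<n} - J" "card T = m - card J" "finite T"
      using extend_subset[OF J mn] by blast
    define I where "I = J \<union> T"
    have fI: "finite I" using fJ T by (simp add: I_def)
    have cI: "card I = m" unfolding I_def using T fJ J by (subst card_Un_disjoint) auto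
    have IS: "I \<subseteq> {0..<n}" using J T by (auto simp: I_def)
    have "I \<in> msubsets n m" using IS cI by (simp add: msubsets_def)
    hence "maxminor A I \<noteq> 0" using t by (simp add: tnz_def)
    hence d: "det (cm m A (pick I)) \<noteq> 0" using cm_pick[OF A IS cI] by (simp add: maxminor_def)
    show "lin_indep_fam m (col A) J" unfolding lin_indep_fam_def
    proof (intro allI impI ballI)
      fix c :: "nat \<Rightarrow> real" and j0
      assume h: "\<forall>k<m. (\<Sum>j\<in>J. c j * col A j $ k) = 0" and j0: "j0 \<in> J"
      define c0 where "c0 i = (if i \<in> J then c i else 0)" for i
      define x where "x = vec m (\<lambda>t. c0 (pick I t))"
      have x: "x \<in> carrier_vec m" by (simp add: x_def)
      have "cm m A (pick I) *\<^sub>v x = 0\<^sub>v m"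
      proof (rule eq_vecI)
        fix k assume "k < dim_vec (0\<^sub>v m :: real vec)"
        hence k: "k < m" by simp
        have "(cm m A (pick I) *\<^sub>v x) $ k = (\<Sum>t<m. x $ t * A $$ (k, pick I t))" by (rule t1[OF k x])
        also have "\<dots> = (\<Sum>t<card I. (\<lambda>i. c0 i * A $$ (k, i)) (pick I t))"
          using cI by (intro sum.cong) (simp_all add: x_def)
        also have "\<dots> = (\<Sum>i\<in>I. c0 i * A $$ (k, i))"
          by (rule sum.reindex_bij_betw[OF pick_bij[OF fI]])
        also have "\<dots> = (\<Sum>i\<in>J. c0 i * A $$ (k, i)) + (\<Sum>i\<in>T. c0 i * A $$ (k, i))"
          unfolding I_def using fJ T by (intro sum.union_disjoint) auto
        also have "(\<Sum>i\<in>T. c0 i * A $$ (k, i)) = 0" using T by (intro sum.neutral) (auto simp: c0_def)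
        also have "(\<Sum>i\<in>J. c0 i * A $$ (k, i)) = (\<Sum>j\<in>J. c j * col A j $ k)"
          using J A k by (intro sum.cong) (auto simp: c0_def)
        also have "\<dots> = 0" using h k by simp
        finally show "(cm m A (pick I) *\<^sub>v x) $ k = 0\<^sub>v m $ k" using k by simp
      qed (simp add: cm_def)
      note Mx = this
      have "\<not> (\<exists>v. v \<in> carrier_vec m \<and> v \<noteq> 0\<^sub>v m \<and> cm m A (pick I) *\<^sub>v v = 0\<^sub>v m)"
        using d det_0_iff_vec_prod_zero_field[OF cm_carrier, of m A "pick I"] by simp
      hence x0: "x = 0\<^sub>v m" using x Mx by blast
      define t where "t = card {a\<in>I. a < j0}"
      have j0I: "j0 \<in> I" using j0 by (simp add: I_def)
      have pt: "pick I t = j0" using pick_card_in_set[OF j0I] by (simp add: t_def)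
      have "{a\<in>I. a < j0} \<subset> I" using j0I by auto
      hence "card {a\<in>I. a < j0} < card I" by (rule psubset_card_mono[OF fI])
      hence tm: "t < m" by (simp add: t_def cI)
      have "x $ t = c j0" using tm pt j0 by (simp add: x_def c0_def)
      thus "c j0 = 0" using x0 tm by simp
    qed
  qed
qed


lemma pos_chain: "(x::real) * y > 0 \<Longrightarrow> y * z > 0 \<Longrightarrow> x * z > 0"
  by (auto simp: zero_less_mult_iff)

definition ssim :: "nat \<Rightarrow> nat \<Rightarrow> real mat \<Rightarrow> real mat \<Rightarrow> bool" where
  "ssim m n A B \<longleftrightarrow> (\<exists>e::real. (e = 1 \<or> e = -1) \<and>
      (\<forall>I\<in>msubsets n m. maxminor A I * maxminor B I * e > 0))"

definition csgn :: "nat set set \<Rightarrow> nat set \<Rightarrow> real" where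
  "csgn C I = (if I \<in> C then 1 else -1)"

lemma csgn_sq: "csgn C I * csgn C I = 1" by (simp add: csgn_def)

lemma strat_char:
  assumes "A \<in> stratum m n C"
  shows "\<exists>e::real. (e = 1 \<or> e = -1) \<and> (\<forall>I\<in>msubsets n m. maxminor A I * csgn C I * e > 0)"
proof -
  let ?P = "\<forall>I\<in>msubsets n m. (I \<in> C \<longrightarrow> maxminor A I > 0) \<and> (I \<notin> C \<longrightarrow> maxminor A I < 0)"
  let ?N = "\<forall>I\<in>msubsets n m. (I \<in> C \<longrightarrow> maxminor A I < 0) \<and> (I \<notin> C \<longrightarrow> maxminor A I > 0)"
  have "?P \<or> ?N" using assms by (simp add: stratum_def)
  thus ?thesis
  proof
    assume p: ?P
    have "\<forall>I\<in>msubsets n m. maxminor A I * csgn C I * 1 > 0"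
    proof
      fix I assume I: "I \<in> msubsets n m"
      show "maxminor A I * csgn C I * 1 > 0"
      proof (cases "I \<in> C")
        case True thus ?thesis using p I by (simp add: csgn_def)
      next
        case False thus ?thesis using p I by (simp add: csgn_def)
      qed
    qed
    thus ?thesis by blast
  next
    assume p: ?N
    have "\<forall>I\<in>msubsets n m. maxminor A I * csgn C I * -1 > 0"
    proof
      fix I assume I: "I \<in> msubsets n m"
      show "maxminor A I * csgn C I * -1 > 0"
      proof (cases "I \<in> C")
        case True thus ?thesis using p I by (simp add: csgn_def)
      next
        case False thus ?thesis using p I by (simp add: csgn_def)
      qed
    qed
    thus ?thesis by blast
  qed
qed

lemma char_strat:
  assumes t: "tnz m n A" and e: "e = 1 \<or> e = -1" and h: "\<forall>I\<in>msubsets n m. maxminor A I * csgn C I * e > 0"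
  shows "A \<in> stratum m n C"
proof -
  let ?P = "\<forall>I\<in>msubsets n m. (I \<in> C \<longrightarrow> maxminor A I > 0) \<and> (I \<notin> C \<longrightarrow> maxminor A I < 0)"
  let ?N = "\<forall>I\<in>msubsets n m. (I \<in> C \<longrightarrow> maxminor A I < 0) \<and> (I \<notin> C \<longrightarrow> maxminor A I > 0)"
  have "?P \<or> ?N"
  proof (cases "e = 1")
    case True
    have ?P
    proof (intro ballI conjI impI)
      fix I assume I: "I \<in> msubsets n m"
      hence hI: "maxminor A I * csgn C I > 0" using h True by simp
      { assume "I \<in> C" thus "maxminor A I > 0" using hI by (simp add: csgn_def) }
      { assume "I \<notin> C" thus "maxminor A I < 0" using hI by (simp add: csgn_def) }
    qed
    thus ?thesis ..
  next
    case False
    hence e1: "e = -1" using e by simp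
    have ?N
    proof (intro ballI conjI impI)
      fix I assume I: "I \<in> msubsets n m"
      hence hI: "maxminor A I * csgn C I * -1 > 0" using h e1 by simp
      { assume "I \<in> C" thus "maxminor A I < 0" using hI by (simp add: csgn_def) }
      { assume "I \<notin> C" thus "maxminor A I > 0" using hI by (simp add: csgn_def) }
    qed
    thus ?thesis ..
  qed
  thus ?thesis using t by (simp add: stratum_def)
qed

lemma stratum_ssim:
  assumes "A \<in> stratum m n C" "B \<in> stratum m n C"
  shows "ssim m n A B"
proof -
  obtain e :: real where e: "e = 1 \<or> e = -1" and h: "\<forall>I\<in>msubsets n m. maxminor A I * csgn C I * e > 0"
    using strat_char[OF assms(1)] by blast
  obtain f :: real where f: "f = 1 \<or> f = -1" and h2: "\<forall>I\<in>msubsets n m. maxminor B I * csgn C I * f > 0"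
    using strat_char[OF assms(2)] by blast
  have "\<forall>I\<in>msubsets n m. maxminor A I * maxminor B I * (e * f) > 0"
  proof
    fix I assume I: "I \<in> msubsets n m"
    have "(maxminor A I * csgn C I * e) * (maxminor B I * csgn C I * f) > 0"
      using h h2 I by (simp add: mult_pos_pos)
    also have "(maxminor A I * csgn C I * e) * (maxminor B I * csgn C I * f) =
       (maxminor A I * maxminor B I * (e * f)) * (csgn C I * csgn C I)" by (simp add: ac_simps)
    also have "\<dots> = maxminor A I * maxminor B I * (e * f)" by (simp add: csgn_sq)
    finally show "maxminor A I * maxminor B I * (e * f) > 0" .
  qed
  moreover have "e * f = 1 \<or> e * f = -1" using e f by auto
  ultimately show ?thesis unfolding ssim_def by blast
qed

lemma ssim_stratum:
  assumes t: "tnz m n A" and B: "B \<in> stratum m n D" and s: "ssim m n A B"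
  shows "A \<in> stratum m n D"
proof -
  obtain e :: real where e: "e = 1 \<or> e = -1" and h: "\<forall>I\<in>msubsets n m. maxminor A I * maxminor B I * e > 0"
    using s by (auto simp: ssim_def)
  obtain f :: real where f: "f = 1 \<or> f = -1" and h2: "\<forall>I\<in>msubsets n m. maxminor B I * csgn D I * f > 0"
    using strat_char[OF B] by blast
  have "\<forall>I\<in>msubsets n m. maxminor A I * csgn D I * (e * f) > 0"
  proof
    fix I assume I: "I \<in> msubsets n m"
    have "(maxminor A I * e) * maxminor B I > 0" using h I by (simp add: ac_simps)
    moreover have "maxminor B I * (csgn D I * f) > 0" using h2 I by (simp add: ac_simps)
    ultimately have "(maxminor A I * e) * (csgn D I * f) > 0" by (rule pos_chain)
    thus "maxminor A I * csgn D I * (e * f) > 0" by (simp add: ac_simps)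
  qed
  moreover have "e * f = 1 \<or> e * f = -1" using e f by auto
  ultimately show ?thesis using char_strat[OF t, of "e * f" D] by blast
qed

lemma ssim_trans:
  assumes "ssim m n A B" "ssim m n B C" shows "ssim m n A C"
proof -
  obtain e :: real where e: "e = 1 \<or> e = -1" and h: "\<forall>I\<in>msubsets n m. maxminor A I * maxminor B I * e > 0"
    using assms(1) by (auto simp: ssim_def)
  obtain f :: real where f: "f = 1 \<or> f = -1" and h2: "\<forall>I\<in>msubsets n m. maxminor B I * maxminor C I * f > 0"
    using assms(2) by (auto simp: ssim_def)
  have "\<forall>I\<in>msubsets n m. maxminor A I * maxminor C I * (e * f) > 0"
  proof
    fix I assume I: "I \<in> msubsets n m"
    have "(maxminor A I * e) * maxminor B I > 0" using h I by (simp add: ac_simps)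
    moreover have "maxminor B I * (maxminor C I * f) > 0" using h2 I by (simp add: ac_simps)
    ultimately have "(maxminor A I * e) * (maxminor C I * f) > 0" by (rule pos_chain)
    thus "maxminor A I * maxminor C I * (e * f) > 0" by (simp add: ac_simps)
  qed
  moreover have "e * f = 1 \<or> e * f = -1" using e f by auto
  ultimately show ?thesis unfolding ssim_def by blast
qed

lemma DD_ssim:
  assumes s: "ssim m n A B" and A: "A \<in> carrier_mat m n" and B: "B \<in> carrier_mat m n"
  shows "\<exists>e::real. (e = 1 \<or> e = -1) \<and> (\<forall>g. inj_on g {..<m} \<and> g ` {..<m} \<subseteq> {0..<n} \<longrightarrow>
           det (cm m A g) * det (cm m B g) * e > 0)"
proof -
  obtain e :: real where e: "e = 1 \<or> e = -1" and h: "\<forall>I\<in>msubsets n m. maxminor A I * maxminor B I * e > 0"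
    using s by (auto simp: ssim_def)
  show ?thesis
  proof (intro exI[of _ e] conjI allI impI)
    fix g assume g: "inj_on g {..<m} \<and> g ` {..<m} \<subseteq> {0..<n}"
    obtain t :: real where t: "t * t = 1" and tt: "\<forall>A\<in>carrier_mat m n. det (cm m A g) = t * maxminor A (g ` {..<m})"
      using DD_sorted[of g m n] g by blast
    have "g ` {..<m} \<in> msubsets n m" using g card_image[of g "{..<m}"] by (simp add: msubsets_def)
    hence "maxminor A (g ` {..<m}) * maxminor B (g ` {..<m}) * e > 0" using h by blast
    moreover have "det (cm m A g) * det (cm m B g) * e = (t * t) * (maxminor A (g ` {..<m}) * maxminor B (g ` {..<m}) * e)"
      using tt A B by (simp add: ac_simps)
    moreover have "(t * t) * (maxminor A (g ` {..<m}) * maxminor B (g ` {..<m}) * e) = maxminor A (g ` {..<m}) * maxminor B (g ` {..<m}) * e"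
      using t by simp
    ultimately show "det (cm m A g) * det (cm m B g) * e > 0" by linarith
  qed (use e in auto)
qed

lemma perm_mm:
  assumes tau: "\<tau> permutes {0..<n}" and I: "I \<in> msubsets n m"
  shows "\<exists>s::real. s * s = 1 \<and> Hilbert_Choice.inv \<tau> ` I \<in> msubsets n m \<and>
     (\<forall>A\<in>carrier_mat m n. maxminor (perm_act \<tau> A) I = s * maxminor A (Hilbert_Choice.inv \<tau> ` I))"
proof -
  let ?i = "Hilbert_Choice.inv \<tau>"
  have it: "?i permutes {0..<n}" by (rule permutes_inv[OF tau])
  have IS: "I \<subseteq> {0..<n}" and cI: "card I = m" using I by (auto simp: msubsets_def)
  have fI: "finite I" using IS finite_subset by blast
  have pb: "bij_betw (pick I) {..<m} I" using pick_bij[OF fI] cI by simp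
  let ?g = "?i \<circ> pick I"
  have inj: "inj_on ?g {..<m}"
    using pb permutes_inj[OF it] by (auto simp: bij_betw_def intro!: comp_inj_on inj_on_subset[of ?i UNIV])
  have img: "?g ` {..<m} = ?i ` I"
  proof -
    have "?g ` {..<m} = ?i ` (pick I ` {..<m})" by (rule image_comp[symmetric])
    also have "pick I ` {..<m} = I" using pb by (simp add: bij_betw_def)
    finally show ?thesis .
  qed
  have rng: "?g ` {..<m} \<subseteq> {0..<n}" unfolding img using IS permutes_in_image[OF it] by auto
  obtain s :: real where s: "s * s = 1" and ss: "\<forall>A\<in>carrier_mat m n. det (cm m A ?g) = s * maxminor A (?g ` {..<m})"
    using DD_sorted[OF inj rng] by blast
  have pl: "\<And>j. j < m \<Longrightarrow> pick I j < n"
  proof -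
    fix j assume "j < m"
    hence "pick I j \<in> I" using pb bij_betwE by blast
    thus "pick I j < n" using IS by auto
  qed
  show ?thesis
  proof (intro exI[of _ s] conjI ballI)
    show "s * s = 1" by (rule s)
    have "card (?i ` I) = m" using cI card_image[OF inj_on_subset[OF permutes_inj[OF it], of I]] by simp
    thus "?i ` I \<in> msubsets n m" using rng img by (simp add: msubsets_def)
    fix A :: "real mat" assume A: "A \<in> carrier_mat m n"
    have "maxminor (perm_act \<tau> A) I = det (cm m (perm_act \<tau> A) (pick I))"
      using cm_pick[OF perm_act_carrier[OF A] IS cI] by (simp add: maxminor_def)
    also have "\<dots> = det (cm m A ?g)" using cm_perm_act[OF A pl] by simp
    also have "\<dots> = s * maxminor A (?i ` I)" using ss A img by simp
    finally show "maxminor (perm_act \<tau> A) I = s * maxminor A (?i ` I)" .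
  qed
qed

lemma perm_tnz:
  assumes tau: "\<tau> permutes {0..<n}" and t: "tnz m n A"
  shows "tnz m n (perm_act \<tau> A)"
proof -
  have A: "A \<in> carrier_mat m n" using t by (simp add: tnz_def)
  have "maxminor (perm_act \<tau> A) I \<noteq> 0" if I: "I \<in> msubsets n m" for I
  proof -
    obtain s :: real where s: "s * s = 1" and J: "Hilbert_Choice.inv \<tau> ` I \<in> msubsets n m"
      and e: "maxminor (perm_act \<tau> A) I = s * maxminor A (Hilbert_Choice.inv \<tau> ` I)"
      using perm_mm[OF tau I] A by blast
    have "maxminor A (Hilbert_Choice.inv \<tau> ` I) \<noteq> 0" using t J by (simp add: tnz_def)
    moreover have "s \<noteq> 0" using s by auto
    ultimately show ?thesis using e by simp
  qed
  thus ?thesis using perm_act_carrier[OF A] by (simp add: tnz_def)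
qed

lemma perm_ssim:
  assumes tau: "\<tau> permutes {0..<n}" and A: "A \<in> carrier_mat m n" and B: "B \<in> carrier_mat m n"
    and s: "ssim m n A B"
  shows "ssim m n (perm_act \<tau> A) (perm_act \<tau> B)"
proof -
  obtain e :: real where e: "e = 1 \<or> e = -1" and h: "\<forall>I\<in>msubsets n m. maxminor A I * maxminor B I * e > 0"
    using s by (auto simp: ssim_def)
  have "maxminor (perm_act \<tau> A) I * maxminor (perm_act \<tau> B) I * e > 0" if I: "I \<in> msubsets n m" for I
  proof -
    obtain t :: real where t: "t * t = 1" and J: "Hilbert_Choice.inv \<tau> ` I \<in> msubsets n m"
      and tt: "\<forall>A\<in>carrier_mat m n. maxminor (perm_act \<tau> A) I = t * maxminor A (Hilbert_Choice.inv \<tau> ` I)"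
      using perm_mm[OF tau I] by blast
    have "maxminor (perm_act \<tau> A) I * maxminor (perm_act \<tau> B) I * e =
      (t * t) * (maxminor A (Hilbert_Choice.inv \<tau> ` I) * maxminor B (Hilbert_Choice.inv \<tau> ` I) * e)"
      using tt A B by (simp add: ac_simps)
    moreover have "(t * t) * (maxminor A (Hilbert_Choice.inv \<tau> ` I) * maxminor B (Hilbert_Choice.inv \<tau> ` I) * e) =
       maxminor A (Hilbert_Choice.inv \<tau> ` I) * maxminor B (Hilbert_Choice.inv \<tau> ` I) * e" using t by simp
    moreover have "maxminor A (Hilbert_Choice.inv \<tau> ` I) * maxminor B (Hilbert_Choice.inv \<tau> ` I) * e > 0" using h J by blast
    ultimately show ?thesis by linarith
  qed
  thus ?thesis using e unfolding ssim_def by blast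
qed

lemma connect:
  fixes Q :: "nat set \<Rightarrow> real"
  assumes adj: "\<And>I p q. I \<in> msubsets n m \<Longrightarrow> p \<in> I \<Longrightarrow> q \<in> {0..<n} \<Longrightarrow> q \<notin> I \<Longrightarrow>
        Q I * Q (insert q (I - {p})) > 0"
    and nz: "\<And>I. I \<in> msubsets n m \<Longrightarrow> Q I \<noteq> 0"
  shows "\<And>I J. I \<in> msubsets n m \<Longrightarrow> J \<in> msubsets n m \<Longrightarrow> Q I * Q J > 0"
proof -
  have main: "\<forall>I. I \<in> msubsets n m \<longrightarrow> card (I - J) = d \<longrightarrow> Q I * Q J > 0"
    if J: "J \<in> msubsets n m" for J d
  proof (induction d)
    case 0
    show ?case
    proof (intro allI impI)
      fix I assume I: "I \<in> msubsets n m" and c: "card (I - J) = 0"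
      have fI: "finite I" using I finite_subset by (auto simp: msubsets_def)
      have fJ: "finite J" using J finite_subset by (auto simp: msubsets_def)
      have "I - J = {}" using c fI by simp
      hence "I \<subseteq> J" by blast
      moreover have "card I = card J" using I J by (simp add: msubsets_def)
      ultimately have "I = J" using fJ card_subset_eq by blast
      moreover have "Q I \<noteq> 0" by (rule nz[OF I])
      ultimately show "Q I * Q J > 0" by (simp add: zero_less_mult_iff) (meson linorder_neqE_linordered_idom)
    qed
  next
    case (Suc d)
    show ?case
    proof (intro allI impI)
      fix I assume I: "I \<in> msubsets n m" and c: "card (I - J) = Suc d"
      have IS: "I \<subseteq> {0..<n}" and cI: "card I = m" using I by (auto simp: msubsets_def)
      have JS: "J \<subseteq> {0..<n}" and cJ: "card J = m" using J by (auto simp: msubsets_def)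
      have fI: "finite I" using IS finite_subset by blast
      have fJ: "finite J" using JS finite_subset by blast
      obtain p where p: "p \<in> I - J" using c by (metis card.empty ex_in_conv nat.distinct(1))
      have "card (J - I) = card (I - J)"
      proof -
        have "card (I - J) = card I - card (I \<inter> J)" using fI by (metis card_Diff_subset_Int finite_Int Diff_Int2 Int_commute inf.idem) 
        moreover have "card (J - I) = card J - card (J \<inter> I)" using fJ by (metis card_Diff_subset_Int finite_Int Diff_Int2 Int_commute inf.idem)
        ultimately show ?thesis using cI cJ by (simp add: Int_commute)
      qed
      hence "card (J - I) \<noteq> 0" using c by simp
      hence "J - I \<noteq> {}" by (metis card.empty)
      then obtain q where q: "q \<in> J - I" by blast
      define I' where "I' = insert q (I - {p})"
      have I'S: "I' \<subseteq> {0..<n}" using IS JS q by (auto simp: I'_def)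
      have "card I \<noteq> 0" using fI p by auto
      hence "card I' = m" using fI p q cI by (simp add: I'_def card_insert_if)
      hence I': "I' \<in> msubsets n m" using I'S by (simp add: msubsets_def)
      have "I' - J = (I - J) - {p}" using p q by (auto simp: I'_def)
      hence "card (I' - J) = d" using c p fI by simp
      hence "Q I' * Q J > 0" using Suc.IH I' by blast
      moreover have "Q I * Q I' > 0" unfolding I'_def using adj[OF I] p q JS by auto
      ultimately show "Q I * Q J > 0" using pos_chain by blast
    qed
  qed
  fix I J assume "I \<in> msubsets n m" "J \<in> msubsets n m"
  thus "Q I * Q J > 0" using main by blast
qed

lemma upd_inj:
  fixes g :: "nat \<Rightarrow> nat" and m j :: nat
  assumes inj: "inj_on g {..m}" and j: "j < m"
  shows "inj_on (g(j := g m)) {..<m}"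
proof (rule inj_onI)
  fix x y assume x: "x \<in> {..<m}" and y: "y \<in> {..<m}" and e: "(g(j := g m)) x = (g(j := g m)) y"
  have gi: "\<And>u v. u \<le> m \<Longrightarrow> v \<le> m \<Longrightarrow> g u = g v \<Longrightarrow> u = v" using inj by (auto dest: inj_onD)
  show "x = y"
  proof (cases "x = j"; cases "y = j")
    assume "x = j" "y \<noteq> j"
    hence "g m = g y" using e by simp
    moreover have "y \<le> m" using y by simp
    ultimately have "m = y" using gi[of m y] by blast
    thus ?thesis using y by simp
  next
    assume "x \<noteq> j" "y = j"
    hence "g x = g m" using e by simp
    moreover have "x \<le> m" using x by simp
    ultimately have "x = m" using gi[of x m] by blast
    thus ?thesis using x by simp
  next
    assume "x \<noteq> j" "y \<noteq> j"
    hence "g x = g y" using e by simp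
    moreover have "x \<le> m" "y \<le> m" using x y by simp_all
    ultimately show ?thesis using gi[of x y] by blast
  qed simp
qed

lemma forward:
  assumes mn: "m \<le> n" and sigma: "\<sigma> permutes {0..<n}" and A: "A \<in> stratum m n C"
    and B: "B \<in> stratum m n D" and PA: "perm_act \<sigma> A \<in> stratum m n D"
  shows "iso_generic_arr m n (col A) (col B)"
proof -
  have tA: "tnz m n A" and tB: "tnz m n B" using A B by (auto simp: stratum_def)
  have cA: "A \<in> carrier_mat m n" and cB: "B \<in> carrier_mat m n" using tA tB by (auto simp: tnz_def)
  let ?A' = "perm_act \<sigma> A"
  have cA': "?A' \<in> carrier_mat m n" by (rule perm_act_carrier[OF cA])
  have ss: "ssim m n ?A' B" by (rule stratum_ssim[OF PA B])
  obtain e :: real where e: "e = 1 \<or> e = -1" and he0: "\<forall>g. inj_on g {..<m} \<and> g ` {..<m} \<subseteq> {0..<n} \<longrightarrow>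
           det (cm m ?A' g) * det (cm m B g) * e > 0"
    using DD_ssim[OF ss cA' cB] by (elim exE conjE) 
  have he: "\<And>g. inj_on g {..<m} \<Longrightarrow> g ` {..<m} \<subseteq> {0..<n} \<Longrightarrow>
           det (cm m ?A' g) * det (cm m B g) * e > 0" using he0 by simp
  have iso: "iso_arr m n (col A) (col B)"
    unfolding iso_arr_def
  proof (intro exI[of _ \<sigma>] conjI allI impI)
    show "bij_betw \<sigma> {0..<n} {0..<n}" by (rule permutes_imp_bij[OF sigma])
    fix f a b j
    assume f: "inj_on f {..m} \<and> f ` {..m} \<subseteq> {0..<n}"
      and hab: "(\<forall>k<m. col A (f m) $ k = (\<Sum>j<m. a j * col A (f j) $ k)) \<and>
              (\<forall>k<m. col B (\<sigma> (f m)) $ k = (\<Sum>j<m. b j * col B (\<sigma> (f j)) $ k))"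
      and j: "j < m"
    define g where "g = \<sigma> \<circ> f"
    have fl: "\<And>i. i \<le> m \<Longrightarrow> f i < n" using f by auto
    have gl: "\<And>i. i \<le> m \<Longrightarrow> g i < n" using fl permutes_in_image[OF sigma] by (simp add: g_def)
    have ginj: "inj_on g {..m}" unfolding g_def
      by (rule comp_inj_on) (use f inj_on_subset[OF permutes_inj[OF sigma]] in blast)+
    have Aeq: "\<And>k i. k < m \<Longrightarrow> i \<le> m \<Longrightarrow> ?A' $$ (k, g i) = col A (f i) $ k"
    proof -
      fix k i assume k: "k < m" and i: "i \<le> m"
      have "?A' $$ (k, g i) = A $$ (k, Hilbert_Choice.inv \<sigma> (g i))" by (rule perm_act_index[OF cA k gl[OF i]])
      also have "Hilbert_Choice.inv \<sigma> (g i) = f i" using permutes_inverses(2)[OF sigma] by (simp add: g_def)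
      finally show "?A' $$ (k, g i) = col A (f i) $ k" using cA k fl[OF i] by simp
    qed
    have Beq: "\<And>k i. k < m \<Longrightarrow> i \<le> m \<Longrightarrow> B $$ (k, g i) = col B (\<sigma> (f i)) $ k"
    proof -
      fix k i assume k: "k < m" and i: "i \<le> m"
      have "g i < dim_col B" using gl[OF i] cB by simp
      moreover have "k < dim_row B" using k cB by simp
      ultimately show "B $$ (k, g i) = col B (\<sigma> (f i)) $ k" by (simp add: g_def)
    qed
    have ha: "\<forall>k<m. ?A' $$ (k, g m) = (\<Sum>i<m. a i * ?A' $$ (k, g i))"
    proof (intro allI impI)
      fix k assume k: "k < m"
      have "?A' $$ (k, g m) = col A (f m) $ k" by (rule Aeq[OF k order.refl])
      also have "\<dots> = (\<Sum>i<m. a i * col A (f i) $ k)" using hab k by blast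
      also have "\<dots> = (\<Sum>i<m. a i * ?A' $$ (k, g i))" by (rule sum.cong) (simp_all add: Aeq[OF k])
      finally show "?A' $$ (k, g m) = (\<Sum>i<m. a i * ?A' $$ (k, g i))" .
    qed
    have hb: "\<forall>k<m. B $$ (k, g m) = (\<Sum>i<m. b i * B $$ (k, g i))"
    proof (intro allI impI)
      fix k assume k: "k < m"
      have "B $$ (k, g m) = col B (\<sigma> (f m)) $ k" by (rule Beq[OF k order.refl])
      also have "\<dots> = (\<Sum>i<m. b i * col B (\<sigma> (f i)) $ k)" using hab k by blast
      also have "\<dots> = (\<Sum>i<m. b i * B $$ (k, g i))" by (rule sum.cong) (simp_all add: Beq[OF k])
      finally show "B $$ (k, g m) = (\<Sum>i<m. b i * B $$ (k, g i))" .
    qed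
    have cr1: "det (cm m ?A' (g(j := g m))) = a j * det (cm m ?A' g)" by (rule cramer_step[OF j ha])
    have cr2: "det (cm m B (g(j := g m))) = b j * det (cm m B g)" by (rule cramer_step[OF j hb])
    have i1: "inj_on g {..<m}" using ginj by (rule inj_on_subset) auto
    have r1: "g ` {..<m} \<subseteq> {0..<n}" using gl by auto
    have i2: "inj_on (g(j := g m)) {..<m}" by (rule upd_inj[OF ginj j])
    have r2: "(g(j := g m)) ` {..<m} \<subseteq> {0..<n}" using gl by auto
    have X: "det (cm m ?A' g) * det (cm m B g) * e > 0" by (rule he[OF i1 r1])
    have Y: "det (cm m ?A' (g(j := g m))) * det (cm m B (g(j := g m))) * e > 0" by (rule he[OF i2 r2])
    have "det (cm m ?A' (g(j := g m))) * det (cm m B (g(j := g m))) * e =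
          (a j * b j) * (det (cm m ?A' g) * det (cm m B g) * e)" unfolding cr1 cr2 by (simp add: ac_simps)
    with Y have "(a j * b j) * (det (cm m ?A' g) * det (cm m B g) * e) > 0" by simp
    thus "a j * b j > 0" using X by (rule zero_less_mult_pos2)
  qed
  show ?thesis unfolding iso_generic_arr_def using tnz_generic[OF tA mn] tnz_generic[OF tB mn] iso by blast
qed

lemma det_nz:
  assumes t: "tnz m n A" and inj: "inj_on g {..<m}" and rng: "g ` {..<m} \<subseteq> {0..<n}"
  shows "det (cm m A g) \<noteq> 0"
proof -
  have A: "A \<in> carrier_mat m n" using t by (simp add: tnz_def)
  obtain s :: real where s: "s * s = 1" and ss: "\<forall>A\<in>carrier_mat m n. det (cm m A g) = s * maxminor A (g ` {..<m})"
    using DD_sorted[OF inj rng] by blast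
  have "g ` {..<m} \<in> msubsets n m" using rng card_image[OF inj] by (simp add: msubsets_def)
  hence "maxminor A (g ` {..<m}) \<noteq> 0" using t by (simp add: tnz_def)
  moreover have "s \<noteq> 0" using s by auto
  ultimately show ?thesis using ss A by simp
qed

lemma adj_step:
  fixes \<sigma> \<tau> :: "nat \<Rightarrow> nat"
  assumes m1: "1 \<le> m" and tau: "\<tau> permutes {0..<n}" and tA: "tnz m n A0" and tB: "tnz m n B0"
    and hs: "\<forall>i<n. \<sigma> i = \<tau> i"
    and P: "\<forall>f. inj_on f {..m} \<and> f ` {..m} \<subseteq> {0..<n} \<longrightarrow>
       (\<forall>a b. (\<forall>k<m. col A0 (f m) $ k = (\<Sum>j<m. a j * col A0 (f j) $ k)) \<and>
              (\<forall>k<m. col B0 (\<sigma> (f m)) $ k = (\<Sum>j<m. b j * col B0 (\<sigma> (f j)) $ k))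
              \<longrightarrow> (\<forall>j<m. a j * b j > 0))"
    and I: "I \<in> msubsets n m" and p: "p \<in> I" and q: "q < n" "q \<notin> I"
  shows "(maxminor (perm_act \<tau> A0) I * maxminor B0 I) *
         (maxminor (perm_act \<tau> A0) (insert q (I - {p})) * maxminor B0 (insert q (I - {p}))) > 0"
proof -
  let ?ip = "Hilbert_Choice.inv \<tau>"
  let ?A' = "perm_act \<tau> A0"
  define J where "J = insert q (I - {p})"
  have cA: "A0 \<in> carrier_mat m n" and cB: "B0 \<in> carrier_mat m n" using tA tB by (auto simp: tnz_def)
  have cA': "?A' \<in> carrier_mat m n" by (rule perm_act_carrier[OF cA])
  have tA': "tnz m n ?A'" by (rule perm_tnz[OF tau tA])
  have ipt: "?ip permutes {0..<n}" by (rule permutes_inv[OF tau])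
  have IS: "I \<subseteq> {0..<n}" and cI: "card I = m" using I by (auto simp: msubsets_def)
  have fI: "finite I" using IS finite_subset by blast
  define K where "K = I - {p}"
  have fK: "finite K" using fI by (simp add: K_def)
  have cK: "card K = m - 1" using p cI fI by (simp add: K_def)
  obtain h where h: "bij_betw h {0..<card K} K" using ex_bij_betw_nat_finite[OF fK] by blast
  hence h': "bij_betw h {0..<m-1} K" using cK by simp
  have hK: "\<And>t. t < m - 1 \<Longrightarrow> h t \<in> K" using h' bij_betwE by fastforce
  have pK: "p \<notin> K" and qK: "q \<notin> K" using q by (auto simp: K_def)
  have IK: "I = insert p K" using p by (auto simp: K_def)
  have JK: "J = insert q K" by (simp add: J_def K_def)
  define g where "g k = (if k = 0 then p else if k < m then h (k - 1) else q)" for k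
  define g' where "g' = g(0 := g m)"
  have gm: "g m = q" using m1 by (simp add: g_def)
  have g0: "g 0 = p" by (simp add: g_def)
  have g'0: "g' 0 = q" using gm by (simp add: g'_def)
  have gimg: "g ` {..<m} = I"
  proof
    show "g ` {..<m} \<subseteq> I"
    proof
      fix x assume "x \<in> g ` {..<m}"
      then obtain k where k: "k < m" and x: "x = g k" by auto
      show "x \<in> I"
      proof (cases "k = 0")
        case True thus ?thesis using x p by (simp add: g_def)
      next
        case False hence "k - 1 < m - 1" using k by simp
        thus ?thesis using x k False hK IK by (simp add: g_def)
      qed
    qed
    show "I \<subseteq> g ` {..<m}"
    proof
      fix x assume x: "x \<in> I"
      show "x \<in> g ` {..<m}"
      proof (cases "x = p")
        case True thus ?thesis using g0 m1 by force
      next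
        case False hence "x \<in> K" using x by (simp add: K_def)
        then obtain t where t: "t < m - 1" "h t = x" using h' by (auto simp: bij_betw_def)
        hence "g (Suc t) = x" "Suc t < m" by (auto simp: g_def)
        thus ?thesis by (metis image_eqI lessThan_iff)
      qed
    qed
  qed
  have g'img: "g' ` {..<m} = J"
  proof
    show "g' ` {..<m} \<subseteq> J"
    proof
      fix x assume "x \<in> g' ` {..<m}"
      then obtain k where k: "k < m" and x: "x = g' k" by auto
      show "x \<in> J"
      proof (cases "k = 0")
        case True thus ?thesis using x g'0 JK by simp
      next
        case False hence "k - 1 < m - 1" using k by simp
        thus ?thesis using x k False hK JK by (simp add: g'_def g_def)
      qed
    qed
    show "J \<subseteq> g' ` {..<m}"
    proof
      fix x assume x: "x \<in> J"
      show "x \<in> g' ` {..<m}"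
      proof (cases "x = q")
        case True thus ?thesis using g'0 m1 by force
      next
        case False hence "x \<in> K" using x JK by simp
        then obtain t where t: "t < m - 1" "h t = x" using h' by (auto simp: bij_betw_def)
        hence "g' (Suc t) = x" "Suc t < m" by (auto simp: g_def g'_def)
        thus ?thesis by (metis image_eqI lessThan_iff)
      qed
    qed
  qed
  have cJ: "card J = m" using JK qK fK cK m1 by simp
  have JS: "J \<subseteq> {0..<n}" using JK IK IS q by auto
  have ginj: "inj_on g {..<m}" by (rule eq_card_imp_inj_on) (simp_all add: gimg cI)
  have g'inj: "inj_on g' {..<m}" by (rule eq_card_imp_inj_on) (simp_all add: g'img cJ)
  have ginjm: "inj_on g {..m}"
  proof -
    have "{..m} = insert m {..<m}" by auto
    moreover have "g m \<notin> g ` ({..<m} - {m})" using gm gimg q by simp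
    ultimately show ?thesis using ginj by simp
  qed
  have grng: "g ` {..<m} \<subseteq> {0..<n}" using gimg IS by simp
  have g'rng: "g' ` {..<m} \<subseteq> {0..<n}" using g'img JS by simp
  have gl: "\<And>i. i \<le> m \<Longrightarrow> g i < n"
  proof -
    fix i assume "i \<le> m"
    hence "i < m \<or> i = m" by auto
    thus "g i < n" using grng gm q by auto
  qed
  define f where "f = ?ip \<circ> g"
  have fl: "\<And>i. i \<le> m \<Longrightarrow> f i < n" using gl permutes_in_image[OF ipt] by (simp add: f_def)
  have sf: "\<And>i. i \<le> m \<Longrightarrow> \<sigma> (f i) = g i"
    using hs fl permutes_inverses(1)[OF tau] by (simp add: f_def)
  have finj: "inj_on f {..m}" unfolding f_def
    by (rule comp_inj_on[OF ginjm]) (rule inj_on_subset[OF permutes_inj[OF ipt]], simp)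
  have frng: "f ` {..m} \<subseteq> {0..<n}" using fl by auto
  have finj': "inj_on f {..<m}" using finj by (rule inj_on_subset) auto
  have frng': "f ` {..<m} \<subseteq> {0..<n}" using fl by auto
  obtain a where ha: "\<forall>k<m. A0 $$ (k, f m) = (\<Sum>i<m. a i * A0 $$ (k, f i))"
    using solve_exists[OF det_nz[OF tA finj' frng']] by blast
  obtain b where hb: "\<forall>k<m. B0 $$ (k, g m) = (\<Sum>i<m. b i * B0 $$ (k, g i))"
    using solve_exists[OF det_nz[OF tB ginj grng]] by blast
  have colA: "\<And>k i. k < m \<Longrightarrow> i \<le> m \<Longrightarrow> col A0 (f i) $ k = A0 $$ (k, f i)"
    using cA fl by simp
  have colB: "\<And>k i. k < m \<Longrightarrow> i \<le> m \<Longrightarrow> col B0 (\<sigma> (f i)) $ k = B0 $$ (k, g i)"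
    using cB gl sf by simp
  have "(\<forall>k<m. col A0 (f m) $ k = (\<Sum>j<m. a j * col A0 (f j) $ k))"
  proof (intro allI impI)
    fix k assume k: "k < m"
    have "col A0 (f m) $ k = A0 $$ (k, f m)" by (rule colA[OF k order.refl])
    also have "\<dots> = (\<Sum>i<m. a i * A0 $$ (k, f i))" using ha k by blast
    also have "\<dots> = (\<Sum>j<m. a j * col A0 (f j) $ k)" by (rule sum.cong) (simp_all add: colA[OF k])
    finally show "col A0 (f m) $ k = (\<Sum>j<m. a j * col A0 (f j) $ k)" .
  qed
  moreover have "(\<forall>k<m. col B0 (\<sigma> (f m)) $ k = (\<Sum>j<m. b j * col B0 (\<sigma> (f j)) $ k))"
  proof (intro allI impI)
    fix k assume k: "k < m"
    have "col B0 (\<sigma> (f m)) $ k = B0 $$ (k, g m)" by (rule colB[OF k order.refl])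
    also have "\<dots> = (\<Sum>i<m. b i * B0 $$ (k, g i))" using hb k by blast
    also have "\<dots> = (\<Sum>j<m. b j * col B0 (\<sigma> (f j)) $ k)" by (rule sum.cong) (simp_all add: colB[OF k])
    finally show "col B0 (\<sigma> (f m)) $ k = (\<Sum>j<m. b j * col B0 (\<sigma> (f j)) $ k)" .
  qed
  ultimately have ab: "a 0 * b 0 > 0" using P finj frng m1 by auto
  have m0: "0 < m" using m1 by simp
  have cr1: "det (cm m A0 (f(0 := f m))) = a 0 * det (cm m A0 f)" by (rule cramer_step[OF m0 ha])
  have cr2: "det (cm m B0 (g(0 := g m))) = b 0 * det (cm m B0 g)" by (rule cramer_step[OF m0 hb])
  have gl': "\<And>j. j < m \<Longrightarrow> g j < n" using gl by simp
  have g'l: "\<And>j. j < m \<Longrightarrow> g' j < n" using g'rng by auto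
  have e1: "cm m ?A' g = cm m A0 f" unfolding f_def by (rule cm_perm_act[OF cA gl'])
  have "cm m ?A' g' = cm m A0 (?ip \<circ> g')" by (rule cm_perm_act[OF cA g'l])
  also have "?ip \<circ> g' = f(0 := f m)" by (rule ext) (simp add: f_def g'_def)
  finally have e2: "cm m ?A' g' = cm m A0 (f(0 := f m))" .
  obtain s1 :: real where s1: "s1 * s1 = 1" and ss1: "\<forall>X\<in>carrier_mat m n. det (cm m X g) = s1 * maxminor X (g ` {..<m})"
    using DD_sorted[OF ginj grng] by blast
  obtain s2 :: real where s2: "s2 * s2 = 1" and ss2: "\<forall>X\<in>carrier_mat m n. det (cm m X g') = s2 * maxminor X (g' ` {..<m})"
    using DD_sorted[OF g'inj g'rng] by blast
  let ?QI = "maxminor ?A' I * maxminor B0 I"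
  let ?QJ = "maxminor ?A' J * maxminor B0 J"
  have LI: "det (cm m ?A' g) * det (cm m B0 g) = ?QI"
  proof -
    have "det (cm m ?A' g) * det (cm m B0 g) = (s1 * s1) * ?QI" using ss1 cA' cB gimg by simp
    thus ?thesis using s1 by simp
  qed
  have LJ: "det (cm m ?A' g') * det (cm m B0 g') = ?QJ"
  proof -
    have "det (cm m ?A' g') * det (cm m B0 g') = (s2 * s2) * ?QJ" using ss2 cA' cB g'img by simp
    thus ?thesis using s2 by simp
  qed
  have "?QJ = (a 0 * b 0) * ?QI"
  proof -
    have "?QJ = det (cm m A0 (f(0 := f m))) * det (cm m B0 (g(0 := g m)))" using LJ e2 by (simp add: g'_def)
    also have "\<dots> = (a 0 * b 0) * (det (cm m A0 f) * det (cm m B0 g))" unfolding cr1 cr2 by (simp add: ac_simps)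
    also have "det (cm m A0 f) * det (cm m B0 g) = ?QI" using LI e1 by simp
    finally show ?thesis .
  qed
  moreover have "?QI \<noteq> 0" using tA' tB I by (simp add: tnz_def)
  ultimately have eqq: "?QI * ?QJ = (a 0 * b 0) * (?QI * ?QI)" by (simp add: ac_simps)
  have sq: "?QI * ?QI > 0" using \<open>?QI \<noteq> 0\<close> not_real_square_gt_zero by blast
  have "(a 0 * b 0) * (?QI * ?QI) > 0" by (rule mult_pos_pos[OF ab sq])
  hence "?QI * ?QJ > 0" using eqq by linarith
  thus ?thesis unfolding J_def .
qed

lemma backward:
  assumes m1: "1 \<le> m" and mn: "m \<le> n" and A0: "A0 \<in> stratum m n C" and B0: "B0 \<in> stratum m n D"
    and iso: "iso_arr m n (col A0) (col B0)"
  shows "same_orbit m n C D"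
proof -
  obtain \<sigma> where sb: "bij_betw \<sigma> {0..<n} {0..<n}" and P: "\<forall>f. inj_on f {..m} \<and> f ` {..m} \<subseteq> {0..<n} \<longrightarrow>
       (\<forall>a b. (\<forall>k<m. col A0 (f m) $ k = (\<Sum>j<m. a j * col A0 (f j) $ k)) \<and>
              (\<forall>k<m. col B0 (\<sigma> (f m)) $ k = (\<Sum>j<m. b j * col B0 (\<sigma> (f j)) $ k))
              \<longrightarrow> (\<forall>j<m. a j * b j > 0))"
    using iso unfolding iso_arr_def by (elim exE conjE)
  define \<tau> where "\<tau> i = (if i < n then \<sigma> i else i)" for i
  have hs: "\<forall>i<n. \<sigma> i = \<tau> i" by (simp add: \<tau>_def)
  have "bij_betw \<tau> {0..<n} {0..<n}" using sb by (rule bij_betw_cong[THEN iffD1, rotated]) (simp add: \<tau>_def)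
  hence tau: "\<tau> permutes {0..<n}" by (rule bij_imp_permutes) (simp add: \<tau>_def)
  have tA: "tnz m n A0" and tB: "tnz m n B0" using A0 B0 by (auto simp: stratum_def)
  have cA: "A0 \<in> carrier_mat m n" and cB: "B0 \<in> carrier_mat m n" using tA tB by (auto simp: tnz_def)
  let ?A' = "perm_act \<tau> A0"
  have tA': "tnz m n ?A'" by (rule perm_tnz[OF tau tA])
  define Q where "Q I = maxminor ?A' I * maxminor B0 I" for I
  have nz: "\<And>I. I \<in> msubsets n m \<Longrightarrow> Q I \<noteq> 0" using tA' tB by (simp add: Q_def tnz_def)
  have adj: "\<And>I p q. I \<in> msubsets n m \<Longrightarrow> p \<in> I \<Longrightarrow> q \<in> {0..<n} \<Longrightarrow> q \<notin> I \<Longrightarrow>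
        Q I * Q (insert q (I - {p})) > 0"
    unfolding Q_def using adj_step[OF m1 tau tA tB hs P] by simp
  have all: "\<And>I J. I \<in> msubsets n m \<Longrightarrow> J \<in> msubsets n m \<Longrightarrow> Q I * Q J > 0"
    by (rule connect[of n m Q, OF adj nz]) 
  have I0: "{0..<m} \<in> msubsets n m" using mn by (simp add: msubsets_def)
  define e :: real where "e = (if Q {0..<m} > 0 then 1 else -1)"
  have "\<forall>I\<in>msubsets n m. maxminor ?A' I * maxminor B0 I * e > 0"
  proof
    fix I assume I: "I \<in> msubsets n m"
    have pr: "Q I * Q {0..<m} > 0" by (rule all[OF I I0])
    show "maxminor ?A' I * maxminor B0 I * e > 0"
    proof (cases "Q {0..<m} > 0")
      case True
      hence "Q I > 0" using pr by (rule zero_less_mult_pos2[rotated])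
      thus ?thesis using True by (simp add: e_def Q_def)
    next
      case False
      hence "Q {0..<m} < 0" using nz[OF I0] by simp
      hence "Q I < 0" using pr by (simp add: zero_less_mult_iff)
      thus ?thesis using False by (simp add: e_def Q_def)
    qed
  qed
  moreover have "e = 1 \<or> e = -1" by (simp add: e_def)
  ultimately have s0: "ssim m n ?A' B0" unfolding ssim_def by blast
  show ?thesis unfolding same_orbit_def
  proof (intro exI[of _ \<tau>] conjI ballI)
    show "\<tau> permutes {0..<n}" by (rule tau)
    fix A assume A: "A \<in> stratum m n C"
    have t: "tnz m n A" using A by (simp add: stratum_def)
    have c: "A \<in> carrier_mat m n" using t by (simp add: tnz_def)
    have "ssim m n A A0" by (rule stratum_ssim[OF A A0])
    hence "ssim m n (perm_act \<tau> A) ?A'" by (rule perm_ssim[OF tau c cA])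
    hence "ssim m n (perm_act \<tau> A) B0" using s0 by (rule ssim_trans)
    thus "perm_act \<tau> A \<in> stratum m n D" by (rule ssim_stratum[OF perm_tnz[OF tau t] B0])
  qed
qed

theorem mainTheorem1:
  fixes m n :: nat and C D :: "nat set set"
  assumes "1 \<le> m" and "m \<le> n"
    and "C \<subseteq> msubsets n m" and "D \<subseteq> msubsets n m"
    and "stratum m n C \<noteq> {}" and "stratum m n D \<noteq> {}"
  shows "same_orbit m n C D \<longleftrightarrow>
    (\<forall>A B. A \<in> stratum m n C \<and> B \<in> stratum m n D \<longrightarrow>
       iso_generic_arr m n (col A) (col B))"
proof
  assume so: "same_orbit m n C D"
  then obtain \<sigma> where sg: "\<sigma> permutes {0..<n}" and h: "\<forall>A\<in>stratum m n C. perm_act \<sigma> A \<in> stratum m n D"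
    unfolding same_orbit_def by (elim exE conjE)
  show "\<forall>A B. A \<in> stratum m n C \<and> B \<in> stratum m n D \<longrightarrow> iso_generic_arr m n (col A) (col B)"
  proof (intro allI impI)
    fix A B assume "A \<in> stratum m n C \<and> B \<in> stratum m n D"
    hence A: "A \<in> stratum m n C" and B: "B \<in> stratum m n D" by auto
    show "iso_generic_arr m n (col A) (col B)" by (rule forward[OF assms(2) sg A B]) (use h A in blast)
  qed
next
  assume H: "\<forall>A B. A \<in> stratum m n C \<and> B \<in> stratum m n D \<longrightarrow> iso_generic_arr m n (col A) (col B)"
  obtain A0 where A0: "A0 \<in> stratum m n C" using assms(5) by blast
  obtain B0 where B0: "B0 \<in> stratum m n D" using assms(6) by blast
  have "iso_arr m n (col A0) (col B0)" using H A0 B0 by (simp add: iso_generic_arr_def)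
  thus "same_orbit m n C D" by (rule backward[OF assms(1,2) A0 B0])
qed

end
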